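(* Let $f(z)=z+\sum_{n\ge2}a_nz^n$ belong to $\Omega$. Then for every $\mu\in\mathbb{C}$, $$|a_3-\mu a_2^2|\le \tfrac14\max\{1,|\mu|\},$$ and the inequality is sharp.
   Context: $\Delta=\{z\in\mathbb{C}:|z|<1\}$. $\mathcal{A}$ is the class of functions $f$ analytic in $\Delta$ with $f(0)=0$, $f'(0)=1$. $\Omega$ is the class of $f\in\mathcal{A}$ with $|zf'(z)-f(z)|<\tfrac12$ for all $z\in\Delta$. *)

theory Defs
  imports "HOL-Complex_Analysis.Complex_Analysis"
begin

definition classA :: "(complex \<Rightarrow> complex) set" where
  "classA = {f. f holomorphic_on ball 0 1 \<and> f 0 = 0 \<and> deriv f 0 = 1}"

definition classOmega :: "(complex \<Rightarrow> complex) set" where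
  "classOmega = {f \<in> classA. \<forall>z\<in>ball 0 1. cmod (z * deriv f z - f z) < 1/2}"

definition tcoeff :: "(complex \<Rightarrow> complex) \<Rightarrow> nat \<Rightarrow> complex" where
  "tcoeff f n = (deriv ^^ n) f 0 / of_nat (fact n)"

end

theory Submission
  imports Defs
begin


lemma hd_sq0: "(deriv ^^ j) (\<lambda>w. w ^ 2) (0::complex) = (if j = 2 then 2 else 0)"
proof -
  have "(deriv ^^ j) (\<lambda>w. (w - 0) ^ 2) (0::complex) = pochhammer (of_nat (Suc 2 - j)) j * (0 - 0) ^ (2 - j)"
    by (rule higher_deriv_power)
  moreover have "j = 2 \<or> j < 2 \<or> j > 2" by auto
  ultimately show ?thesis
    by (auto simp: pochhammer_Suc numeral_2_eq_2 pochhammer_0_left)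
qed

lemma deriv_z2phi:
  assumes hol: "\<phi> holomorphic_on ball 0 1"
    and eq: "\<And>z. z \<in> ball 0 1 \<Longrightarrow> h z = z^2 * \<phi> z"
  shows "(deriv ^^ 2) h 0 = 2 * \<phi> 0" "(deriv ^^ 3) h 0 = 6 * deriv \<phi> 0"
proof -
  have ev: "eventually (\<lambda>z. h z = z^2 * \<phi> z) (nhds 0)"
    using eventually_nhds_in_open[of "ball (0::complex) 1" 0] eq
    by (auto elim!: eventually_mono)
  have m: "(deriv ^^ n) (\<lambda>w. w^2 * \<phi> w) 0 =
     (\<Sum>i = 0..n. of_nat (n choose i) * (deriv ^^ i) (\<lambda>w. w^2) 0 * (deriv ^^ (n-i)) \<phi> 0)" for n
    by (rule higher_deriv_mult[OF _ hol]) (auto intro!: holomorphic_intros)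
  have s2: "(\<Sum>i = 0..2. F i) = F 0 + F 1 + F (2::nat)" for F :: "nat \<Rightarrow> complex"
    by (simp add: eval_nat_numeral)
  have s3: "(\<Sum>i = 0..3. F i) = F 0 + F 1 + F 2 + F (3::nat)" for F :: "nat \<Rightarrow> complex"
    by (simp add: eval_nat_numeral)
  have d0: "(deriv ^^ 0) (\<lambda>w. w^2) (0::complex) = 0" and d1: "(deriv ^^ 1) (\<lambda>w. w^2) (0::complex) = 0"
   and d2: "(deriv ^^ 2) (\<lambda>w. w^2) (0::complex) = 2" and d3: "(deriv ^^ 3) (\<lambda>w. w^2) (0::complex) = 0"
    by (simp_all only: hd_sq0) simp_all
  have "(deriv ^^ 2) h 0 = (deriv ^^ 2) (\<lambda>w. w^2 * \<phi> w) 0"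
    by (rule higher_deriv_cong_ev[OF ev refl])
  also have "\<dots> = 2 * \<phi> 0" unfolding m s2 d0 d1 d2 by simp
  finally show "(deriv ^^ 2) h 0 = 2 * \<phi> 0" .
  have "(deriv ^^ 3) h 0 = (deriv ^^ 3) (\<lambda>w. w^2 * \<phi> w) 0"
    by (rule higher_deriv_cong_ev[OF ev refl])
  also have "\<dots> = 6 * deriv \<phi> 0" proof -
    have c: "(3::nat) choose 2 = 3" by (simp add: numeral_3_eq_3 numeral_2_eq_2)
    show ?thesis unfolding m s3 d0 d1 d2 d3 by (simp add: c)
  qed
  finally show "(deriv ^^ 3) h 0 = 6 * deriv \<phi> 0" .
qed



lemma hd_zf:
  assumes hol: "f holomorphic_on ball 0 1" and n: "n \<ge> 1"
  shows "(deriv ^^ n) (\<lambda>w. w * deriv f w) 0 = of_nat n * (deriv ^^ n) f 0"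
proof -
  have hd: "deriv f holomorphic_on ball 0 1" using hol by (rule holomorphic_deriv) auto
  have "(deriv ^^ n) (\<lambda>w. w * deriv f w) 0 =
     (\<Sum>i = 0..n. of_nat (n choose i) * (deriv ^^ i) (\<lambda>w. w) 0 * (deriv ^^ (n-i)) (deriv f) 0)"
    by (rule higher_deriv_mult[OF _ hd]) (auto intro!: holomorphic_intros)
  also have "\<dots> = (\<Sum>i = 0..n. if i = 1 then of_nat n * (deriv ^^ (n-1)) (deriv f) 0 else 0)"
    by (rule sum.cong) auto
  also have "\<dots> = of_nat n * (deriv ^^ (n-1)) (deriv f) 0" using n by simp
  also have "(deriv ^^ (n-1)) (deriv f) = (deriv ^^ n) f"
    using n by (metis Suc_diff_1 funpow_Suc_right le_numeral_extra(2) less_le_trans linorder_not_le not_one_le_zero o_apply zero_less_one)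
  finally show ?thesis .
qed

lemma hd_h:
  assumes hol: "f holomorphic_on ball 0 1" and n: "n \<ge> 1"
  shows "(deriv ^^ n) (\<lambda>z. 2 * (z * deriv f z - f z)) 0 = 2 * (of_nat n - 1) * (deriv ^^ n) f 0"
proof -
  have hd: "deriv f holomorphic_on ball 0 1" using hol by (rule holomorphic_deriv) auto
  have h1: "(\<lambda>w. w * deriv f w) holomorphic_on ball 0 1" using hd by (auto intro!: holomorphic_intros)
  have "(deriv ^^ n) (\<lambda>z. 2 * (z * deriv f z - f z)) 0 = 2 * (deriv ^^ n) (\<lambda>z. z * deriv f z - f z) 0"
    by (rule higher_deriv_cmult[where A="ball 0 1"]) (use h1 hol in \<open>auto intro!: holomorphic_intros\<close>)
  also have "(deriv ^^ n) (\<lambda>z. z * deriv f z - f z) 0 = (deriv ^^ n) (\<lambda>w. w * deriv f w) 0 - (deriv ^^ n) f 0"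
    by (rule higher_deriv_diff[OF h1 hol]) auto
  finally show ?thesis using hd_zf[OF hol n] by (simp add: algebra_simps)
qed



lemma const_if_norm1:
  assumes hol: "\<phi> holomorphic_on ball 0 1" and le: "\<And>z. z \<in> ball 0 1 \<Longrightarrow> cmod (\<phi> z) \<le> 1"
    and z0: "z0 \<in> ball 0 1" "cmod (\<phi> z0) = 1"
  shows "\<forall>z\<in>ball 0 1. \<phi> z = \<phi> z0"
proof -
  have "\<phi> constant_on ball 0 1"
  proof (rule Schwarz2[OF hol, of "1 - norm z0" z0])
    show "0 < 1 - cmod z0" using z0 by auto
    show "ball z0 (1 - cmod z0) \<subseteq> ball 0 1" by (simp add: ball_subset_ball_iff)
    show "cmod (\<phi> z) \<le> cmod (\<phi> z0)" if "cmod (z0 - z) < 1 - cmod z0" for z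
    proof -
      have "norm z < 1" using that norm_triangle_ineq2[of z z0] by (simp add: norm_minus_commute)
      then show ?thesis using le z0 by auto
    qed
  qed
  then obtain c where "\<forall>z\<in>ball 0 1. \<phi> z = c" by (auto simp: constant_on_def)
  with z0 show ?thesis by auto
qed

lemma pick0:
  assumes hol: "\<phi> holomorphic_on ball 0 1" and le: "\<And>z. z \<in> ball 0 1 \<Longrightarrow> cmod (\<phi> z) \<le> 1"
  shows "cmod (deriv \<phi> 0) \<le> 1 - cmod (\<phi> 0) ^ 2"
proof (cases "\<exists>z\<in>ball 0 1. cmod (\<phi> z) = 1")
  case True
  then obtain z0 where z0: "z0 \<in> ball 0 1" "cmod (\<phi> z0) = 1" by auto
  have c: "\<forall>z\<in>ball 0 1. \<phi> z = \<phi> z0" by (rule const_if_norm1[OF hol le z0])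
  have ev: "eventually (\<lambda>z. \<phi> z = \<phi> z0) (nhds 0)"
    using eventually_nhds_in_open[of "ball (0::complex) 1" 0] c by (auto elim!: eventually_mono)
  have "deriv \<phi> 0 = deriv (\<lambda>_. \<phi> z0) 0" by (rule deriv_cong_ev[OF ev refl])
  then have "deriv \<phi> 0 = 0" by simp
  moreover have "\<phi> 0 = \<phi> z0" using c by auto
  ultimately show ?thesis using z0 by simp
next
  case False
  then have lt: "cmod (\<phi> z) < 1" if "z \<in> ball 0 1" for z using le[OF that] that by force
  define w where "w = \<phi> 0"
  have w1: "cmod w < 1" using lt[of 0] by (simp add: w_def)
  define M where "M = Moebius_function 0 w \<circ> \<phi>"
  have holM: "M holomorphic_on ball 0 1" unfolding M_def
    by (rule holomorphic_on_compose_gen[OF hol Moebius_function_holomorphic[OF w1]]) (use lt in auto)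
  have M0: "M 0 = 0" by (simp add: M_def w_def Moebius_function_eq_zero)
  have Mlt: "cmod (M z) < 1" if "cmod z < 1" for z
    unfolding M_def o_def using Moebius_function_norm_lt_1[OF w1, of "\<phi> z"] lt that by auto
  have dM: "norm (deriv M 0) \<le> 1"
    using Schwarz_Lemma(2)[OF holM M0 Mlt, of 0] by auto
  have nz: "1 - cnj w * w \<noteq> 0"
  proof
    assume "1 - cnj w * w = 0"
    then have "cmod (cnj w * w) = 1" by (metis norm_one right_minus_eq)
    moreover have "cmod (cnj w * w) < 1"
      using w1 by (simp add: norm_mult) (metis mult_strict_mono' norm_ge_zero mult_1_right)
    ultimately show False by simp
  qed
  have dphi: "(\<phi> has_field_derivative deriv \<phi> 0) (at 0)"
    using hol by (intro holomorphic_derivI[OF hol]) auto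
  have "(M has_field_derivative deriv \<phi> 0 / (1 - cnj w * w)) (at 0)"
  proof -
    have "((\<lambda>z. (\<phi> z - w) / (1 - cnj w * \<phi> z)) has_field_derivative
        ((deriv \<phi> 0 * (1 - cnj w * \<phi> 0) + (\<phi> 0 - w) * (cnj w * deriv \<phi> 0)) / (1 - cnj w * \<phi> 0)^2)) (at 0)"
      unfolding w_def
      apply (rule derivative_eq_intros dphi refl)+
      using nz unfolding w_def apply simp
      apply (simp add: power2_eq_square)
      done
    moreover have "M = (\<lambda>z. (\<phi> z - w) / (1 - cnj w * \<phi> z))"
      by (auto simp: M_def Moebius_function_def)
    ultimately show ?thesis using nz by (simp add: w_def power2_eq_square)
  qed
  then have "deriv M 0 = deriv \<phi> 0 / (1 - cnj w * w)" by (rule DERIV_imp_deriv)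
  moreover have "cnj w * w = of_real (cmod w ^ 2)" by (metis complex_norm_square mult.commute of_real_power)
  ultimately have e: "deriv M 0 = deriv \<phi> 0 / of_real (1 - cmod w ^ 2)" by simp
  have d: "0 < 1 - cmod w ^ 2" using w1 by (simp add: abs_square_less_1)
  have "norm (deriv M 0) = cmod (deriv \<phi> 0) / (1 - cmod w ^ 2)"
    unfolding e norm_divide norm_of_real using d by simp
  with dM d have "cmod (deriv \<phi> 0) / (1 - cmod w ^ 2) \<le> 1" by simp
  then show ?thesis using d by (simp add: divide_le_eq w_def)
qed



lemma factor2:
  assumes holh: "h holomorphic_on ball 0 1" and lt: "\<And>z. z \<in> ball 0 1 \<Longrightarrow> cmod (h z) < 1"
    and h0: "h 0 = 0" and dh0: "deriv h 0 = 0"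
  obtains \<phi> where "\<phi> holomorphic_on ball 0 1" "\<And>z. z \<in> ball 0 1 \<Longrightarrow> cmod (\<phi> z) \<le> 1"
    "\<And>z. z \<in> ball 0 1 \<Longrightarrow> h z = z^2 * \<phi> z"
proof -
  obtain k where holk: "k holomorphic_on ball 0 1" and hk: "\<And>z. norm z < 1 \<Longrightarrow> h z = z * k z"
     and dk: "deriv h 0 = k 0"
    by (rule Schwarz3[OF holh h0]) auto
  have k0: "k 0 = 0" using dk dh0 by simp
  have lt': "\<And>z. norm z < 1 \<Longrightarrow> norm (h z) < 1" using lt by auto
  have kle: "cmod (k z) \<le> 1" if "z \<in> ball 0 1" for z
  proof (cases "z = 0")
    case True then show ?thesis using k0 by simp
  next
    case False
    have "norm (h z) \<le> norm z" using Schwarz_Lemma(1)[OF holh h0 lt', of z] that by auto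
    then have "norm z * norm (k z) \<le> norm z * 1" using hk[of z] that by (simp add: norm_mult)
    then show ?thesis using False by (simp add: mult_le_cancel_left)
  qed
  have klt: "cmod (k z) < 1" if "z \<in> ball 0 1" for z
  proof (rule ccontr)
    assume "\<not> cmod (k z) < 1"
    then have "cmod (k z) = 1" using kle[OF that] by simp
    then have "\<forall>z'\<in>ball 0 1. k z' = k z" using const_if_norm1[OF holk kle that] by blast
    then have "k 0 = k z" by simp
    with k0 \<open>cmod (k z) = 1\<close> show False by simp
  qed
  obtain \<phi> where hol\<phi>: "\<phi> holomorphic_on ball 0 1" and k\<phi>: "\<And>z. norm z < 1 \<Longrightarrow> k z = z * \<phi> z"
     and dk\<phi>: "deriv k 0 = \<phi> 0"
    by (rule Schwarz3[OF holk k0]) auto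
  have klt': "\<And>z. norm z < 1 \<Longrightarrow> norm (k z) < 1" using klt by auto
  have ple: "cmod (\<phi> z) \<le> 1" if "z \<in> ball 0 1" for z
  proof (cases "z = 0")
    case True then show ?thesis using Schwarz_Lemma(2)[OF holk k0 klt', of 0] dk\<phi> by simp
  next
    case False
    have "norm (k z) \<le> norm z" using Schwarz_Lemma(1)[OF holk k0 klt', of z] that by auto
    then have "norm z * norm (\<phi> z) \<le> norm z * 1" using k\<phi>[of z] that by (simp add: norm_mult)
    then show ?thesis using False by (simp add: mult_le_cancel_left)
  qed
  show ?thesis
  proof (rule that[OF hol\<phi> ple])
    fix z :: complex assume "z \<in> ball 0 1"
    then show "h z = z^2 * \<phi> z" using hk[of z] k\<phi>[of z] by (simp add: power2_eq_square)
  qed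
qed

lemma hd_poly: "(deriv ^^ n) (\<lambda>z. z + c * z ^ k) (0::complex) =
   (deriv ^^ n) (\<lambda>z. z) 0 + c * (pochhammer (of_nat (Suc k - n)) n * (0 - 0) ^ (k - n))"
proof -
  have "(deriv ^^ n) (\<lambda>z. z + c * z ^ k) (0::complex) = (deriv ^^ n) (\<lambda>z. z) 0 + (deriv ^^ n) (\<lambda>z. c * z ^ k) 0"
    by (rule higher_deriv_add[where S=UNIV]) (auto intro!: holomorphic_intros)
  also have "(deriv ^^ n) (\<lambda>z. c * z ^ k) (0::complex) = c * (deriv ^^ n) (\<lambda>z. (z - 0) ^ k) 0"
    by (subst higher_deriv_cmult[where A=UNIV]) (auto intro!: holomorphic_intros)
  also have "(deriv ^^ n) (\<lambda>z. (z - 0) ^ k) (0::complex) = pochhammer (of_nat (Suc k - n)) n * (0 - 0) ^ (k - n)"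
    by (rule higher_deriv_power)
  finally show ?thesis .
qed

lemma tc_f1: "tcoeff (\<lambda>z. z + (1/4) * z ^ 3) 2 = 0" "tcoeff (\<lambda>z. z + (1/4) * z ^ 3) 3 = 1/4"
  unfolding tcoeff_def hd_poly
  by (simp_all add: pochhammer_Suc numeral_3_eq_3 numeral_2_eq_2 del: funpow.simps)

lemma tc_f2: "tcoeff (\<lambda>z. z + (1/2) * z ^ 2) 2 = 1/2" "tcoeff (\<lambda>z. z + (1/2) * z ^ 2) 3 = 0"
  unfolding tcoeff_def hd_poly
  by (simp_all add: pochhammer_Suc numeral_3_eq_3 numeral_2_eq_2 del: funpow.simps)

lemma f1_in: "(\<lambda>z. z + (1/4) * z ^ 3) \<in> classOmega"
proof -
  have d: "deriv (\<lambda>z. z + (1/4) * z ^ 3) z = 1 + (3/4) * z^2" for z :: complex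
    by (rule DERIV_imp_deriv) (auto intro!: derivative_eq_intros simp: power2_eq_square)
  have "cmod (z * (1 + 3/4 * z^2) - (z + 1/4 * z^3)) < 1/2" if "cmod z < 1" for z :: complex
  proof -
    have e: "z * (1 + 3/4 * z^2) - (z + 1/4 * z^3) = z^3 / 2" by (simp add: algebra_simps power2_eq_square power3_eq_cube)
    have "cmod z ^ 3 < 1" using that by (simp add: power_less_one_iff)
    then show ?thesis unfolding e by (simp add: norm_divide norm_power)
  qed
  then show ?thesis unfolding classOmega_def classA_def mem_Collect_eq d
    by (auto intro!: holomorphic_intros)
qed

lemma f2_in: "(\<lambda>z. z + (1/2) * z ^ 2) \<in> classOmega"
proof -
  have d: "deriv (\<lambda>z. z + (1/2) * z ^ 2) z = 1 + z" for z :: complex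
    by (rule DERIV_imp_deriv) (auto intro!: derivative_eq_intros simp: power2_eq_square)
  have "cmod (z * (1 + z) - (z + 1/2 * z^2)) < 1/2" if "cmod z < 1" for z :: complex
  proof -
    have e: "z * (1 + z) - (z + 1/2 * z^2) = z^2 / 2" by (simp add: algebra_simps power2_eq_square)
    have "cmod z ^ 2 < 1" using that by (simp add: power_less_one_iff)
    then show ?thesis unfolding e by (simp add: norm_divide norm_power)
  qed
  then show ?thesis unfolding classOmega_def classA_def mem_Collect_eq d
    by (auto intro!: holomorphic_intros)
qed


lemma part1:
  assumes f: "f \<in> classOmega"
  shows "cmod (tcoeff f 3 - \<mu> * (tcoeff f 2)^2) \<le> (1/4) * max 1 (cmod \<mu>)"
proof -
  have hol: "f holomorphic_on ball 0 1" and bd: "\<And>z. z \<in> ball 0 1 \<Longrightarrow> cmod (z * deriv f z - f z) < 1/2"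
    using f by (auto simp: classOmega_def classA_def)
  define h where "h = (\<lambda>z. 2 * (z * deriv f z - f z))"
  have hd: "deriv f holomorphic_on ball 0 1" using hol by (rule holomorphic_deriv) auto
  have holh: "h holomorphic_on ball 0 1" unfolding h_def using hol hd by (auto intro!: holomorphic_intros)
  have hlt: "cmod (h z) < 1" if "z \<in> ball 0 1" for z
    using bd[OF that] unfolding h_def norm_mult by simp
  have "f 0 = 0" using f by (auto simp: classOmega_def classA_def)
  then have h0: "h 0 = 0" by (simp add: h_def)
  have "(deriv ^^ 1) h 0 = 2 * (of_nat 1 - 1) * (deriv ^^ 1) f 0"
    unfolding h_def by (rule hd_h[OF hol]) simp
  then have dh0: "deriv h 0 = 0" by simp
  obtain \<phi> where hol\<phi>: "\<phi> holomorphic_on ball 0 1" and le\<phi>: "\<And>z. z \<in> ball 0 1 \<Longrightarrow> cmod (\<phi> z) \<le> 1"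
    and h\<phi>: "\<And>z. z \<in> ball 0 1 \<Longrightarrow> h z = z^2 * \<phi> z"
    by (rule factor2[OF holh hlt h0 dh0]) auto
  have e2: "(deriv ^^ 2) h 0 = 2 * (of_nat 2 - 1) * (deriv ^^ 2) f 0"
    unfolding h_def by (rule hd_h[OF hol]) simp
  have e3: "(deriv ^^ 3) h 0 = 2 * (of_nat 3 - 1) * (deriv ^^ 3) f 0"
    unfolding h_def by (rule hd_h[OF hol]) simp
  have a2: "tcoeff f 2 = \<phi> 0 / 2"
    using e2 deriv_z2phi(1)[OF hol\<phi> h\<phi>] by (simp add: tcoeff_def)
  have f3: "(fact 3 :: complex) = 6" by (simp add: numeral_3_eq_3)
  have a3: "tcoeff f 3 = deriv \<phi> 0 / 4"
  proof -
    have "4 * (deriv ^^ 3) f 0 = 6 * deriv \<phi> 0"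
      using e3 deriv_z2phi(2)[OF hol\<phi> h\<phi>] by simp
    then show ?thesis unfolding tcoeff_def by (simp add: f3 field_simps)
  qed
  have P: "cmod (deriv \<phi> 0) \<le> 1 - cmod (\<phi> 0) ^ 2" by (rule pick0[OF hol\<phi> le\<phi>])
  define t where "t = cmod (\<phi> 0) ^ 2"
  have t01: "0 \<le> t" "t \<le> 1" using le\<phi>[of 0] by (auto simp: t_def power_le_one)
  have "tcoeff f 3 - \<mu> * (tcoeff f 2)^2 = (deriv \<phi> 0 - \<mu> * \<phi> 0 ^ 2) / 4"
    unfolding a2 a3 by (simp add: field_simps power2_eq_square)
  then have "cmod (tcoeff f 3 - \<mu> * (tcoeff f 2)^2) = cmod (deriv \<phi> 0 - \<mu> * \<phi> 0 ^ 2) / 4"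
    by (simp only: norm_divide) simp
  also have "\<dots> \<le> (cmod (deriv \<phi> 0) + cmod \<mu> * t) / 4"
    using norm_triangle_ineq4[of "deriv \<phi> 0" "\<mu> * \<phi> 0 ^ 2"] by (simp add: norm_mult norm_power t_def)
  also have "\<dots> \<le> (1 - t + cmod \<mu> * t) / 4" using P by (simp add: t_def)
  also have "\<dots> \<le> (1/4) * max 1 (cmod \<mu>)"
  proof -
    have "1 - t + cmod \<mu> * t = (1 - t) * 1 + t * cmod \<mu>" by (simp add: algebra_simps)
    also have "\<dots> \<le> (1 - t) * max 1 (cmod \<mu>) + t * max 1 (cmod \<mu>)"
      using t01 by (intro add_mono mult_left_mono) auto
    finally show ?thesis by (simp add: algebra_simps)
  qed
  finally show ?thesis .
qed

theorem theorem6p2: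
  shows "(\<forall>f \<in> classOmega. \<forall>\<mu>::complex.
            cmod (tcoeff f 3 - \<mu> * (tcoeff f 2)^2) \<le> (1/4) * max 1 (cmod \<mu>))
       \<and> (\<forall>\<mu>::complex. \<exists>f \<in> classOmega.
            cmod (tcoeff f 3 - \<mu> * (tcoeff f 2)^2) = (1/4) * max 1 (cmod \<mu>))"
proof (intro conjI ballI allI)
  fix f \<mu> assume "f \<in> classOmega"
  then show "cmod (tcoeff f 3 - \<mu> * (tcoeff f 2)^2) \<le> (1/4) * max 1 (cmod \<mu>)" by (rule part1)
next
  fix \<mu> :: complex
  show "\<exists>f \<in> classOmega. cmod (tcoeff f 3 - \<mu> * (tcoeff f 2)^2) = (1/4) * max 1 (cmod \<mu>)"
  proof (cases "cmod \<mu> \<le> 1")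
    case True
    have "cmod (tcoeff (\<lambda>z. z + (1/4) * z ^ 3) 3 - \<mu> * (tcoeff (\<lambda>z. z + (1/4) * z ^ 3) 2)^2) = (1/4) * max 1 (cmod \<mu>)"
      unfolding tc_f1 using True by (simp add: max_def)
    then show ?thesis using f1_in by blast
  next
    case False
    have "cmod (tcoeff (\<lambda>z. z + (1/2) * z ^ 2) 3 - \<mu> * (tcoeff (\<lambda>z. z + (1/2) * z ^ 2) 2)^2) = (1/4) * max 1 (cmod \<mu>)"
      unfolding tc_f2 using False by (simp add: max_def norm_mult norm_power norm_divide power2_eq_square)
    then show ?thesis using f2_in by blast
  qed
qed

end
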